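(* Let $(X,d_X)$ be a compact metric space, let $0<\gamma<1$, let $(\phi_j)_{j\in\mathbb{N}}$ be maps $\phi_j:X\to X$ with $d_X(\phi_j(x_1),\phi_j(x_2))\le \gamma\, d_X(x_1,x_2)$ for all $j\in\mathbb{N}$ and $x_1,x_2\in X$, and let $(q_j)_{j\in\mathbb{N}}$ be real numbers with $q_j\le 0$ and $\sup_j q_j=0$. Define $M_{\phi,q}:I(X)\to I(X)$ by $$M_{\phi,q}(\mu)(f):=\sup_{j\in\mathbb{N}}\big(q_j+\mu(f\circ\phi_j)\big),\qquad f\in C(X,\mathbb{R}).$$ Let $\tau\in(\gamma,1)$. Then $\operatorname{Lip}(M_{\phi,q})\le \gamma/\tau<1$ with respect to the metric $\tilde d_{\gamma,\tau}$ on $I(X)$; that is, $M_{\phi,q}$ is a Banach contraction for $\tilde d_{\gamma,\tau}$. Consequently there exists a unique $\nu\in I(X)$ with $M_{\phi,q}(\nu)=\nu$, and for every $\mu\in I(X)$ the iterates $M_{\phi,q}^n(\mu)$ converge to $\nu$ with respect to $\tilde d_{\gamma,\tau}$.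
   Context: $C(X,\mathbb{R})$ is the set of continuous real functions on $X$. $I(X)$ is the set of functionals $m:C(X,\mathbb{R})\to\mathbb{R}$ satisfying $m(a+f)=a+m(f)$ for all $a\in\mathbb{R}$, $m(\max(f,g))=\max(m(f),m(g))$, and $m(0)=0$ (idempotent probabilities). (That $M_{\phi,q}(\mu)\in I(X)$ for $\mu\in I(X)$ is part of the setting.) For $a>0$ and $\mu,\nu\in I(X)$ let $d_a(\mu,\nu)=\sup\{|\mu(g)-\nu(g)| : g:X\to\mathbb{R},\ \operatorname{Lip}(g)\le a\}$. For $\beta,\tau\in(0,1)$ define $\tilde d_{\beta,\tau}(\mu,\nu):=\sum_{i\in\mathbb{Z}}\frac{\tau^{|i|}}{\beta^i}\, d_{\beta^i}(\mu,\nu)$; this is a metric on $I(X)$ generating the topology of pointwise convergence on $C(X,\mathbb{R})$. *)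

theory Defs
  imports "HOL-Analysis.Analysis"
begin

text \<open>The compact metric space X is the whole (nonempty) type 'a, assumed compact.
  C(X,R) is the set of functions f :: 'a => real with continuous_on UNIV f.
  A functional on C(X,R) is represented by m :: ('a => real) => real, normalised
  by the convention m f = 0 for non-continuous f, so that equality of functionals
  on C(X,R) is equality in HOL.\<close>

definition idem_prob :: "(('a::metric_space \<Rightarrow> real) \<Rightarrow> real) set" where
  "idem_prob = {m.
     (\<forall>a f. continuous_on UNIV f \<longrightarrow> m (\<lambda>x. a + f x) = a + m f) \<and>
     (\<forall>f g. continuous_on UNIV f \<longrightarrow> continuous_on UNIV g \<longrightarrow>
        m (\<lambda>x. max (f x) (g x)) = max (m f) (m g)) \<and>
     m (\<lambda>x. 0) = 0 \<and>
     (\<forall>f. \<not> continuous_on UNIV f \<longrightarrow> m f = 0)}"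

definition M_op :: "(nat \<Rightarrow> 'a::metric_space \<Rightarrow> 'a) \<Rightarrow> (nat \<Rightarrow> real)
    \<Rightarrow> (('a \<Rightarrow> real) \<Rightarrow> real) \<Rightarrow> (('a \<Rightarrow> real) \<Rightarrow> real)" where
  "M_op \<phi> q \<mu> = (\<lambda>f. if continuous_on UNIV f
                        then (SUP j. q j + \<mu> (f \<circ> \<phi> j)) else 0)"

definition d_lip :: "real \<Rightarrow> (('a::metric_space \<Rightarrow> real) \<Rightarrow> real)
    \<Rightarrow> (('a \<Rightarrow> real) \<Rightarrow> real) \<Rightarrow> real" where
  "d_lip a \<mu> \<nu> = Sup {\<bar>\<mu> g - \<nu> g\<bar> | g. a-lipschitz_on UNIV g}"

definition d_tilde :: "real \<Rightarrow> real \<Rightarrow> (('a::metric_space \<Rightarrow> real) \<Rightarrow> real)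
    \<Rightarrow> (('a \<Rightarrow> real) \<Rightarrow> real) \<Rightarrow> real" where
  "d_tilde \<beta> \<tau> \<mu> \<nu> =
     (\<Sum>\<^sub>\<infinity>i\<in>(UNIV::int set). \<tau> ^ nat \<bar>i\<bar> / \<beta> powi i * d_lip (\<beta> powi i) \<mu> \<nu>)"

end

theory Submission
  imports Defs
begin


lemma ip_transl: "m \<in> idem_prob \<Longrightarrow> continuous_on UNIV f \<Longrightarrow> m (\<lambda>x. a + f x) = a + m f"
  by (simp add: idem_prob_def)
lemma ip_max: "m \<in> idem_prob \<Longrightarrow> continuous_on UNIV f \<Longrightarrow> continuous_on UNIV g \<Longrightarrow>
   m (\<lambda>x. max (f x) (g x)) = max (m f) (m g)"
  by (simp add: idem_prob_def)
lemma ip_zero: "m \<in> idem_prob \<Longrightarrow> m (\<lambda>x. 0) = 0"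
  by (simp add: idem_prob_def)
lemma ip_noncont: "m \<in> idem_prob \<Longrightarrow> \<not> continuous_on UNIV f \<Longrightarrow> m f = 0"
  by (simp add: idem_prob_def)
lemma ip_const: "m \<in> idem_prob \<Longrightarrow> m (\<lambda>x. c) = c"
  using ip_transl[of m "\<lambda>x. 0" c] ip_zero[of m] by simp
lemma ip_mono: assumes "m \<in> idem_prob" "continuous_on UNIV f" "continuous_on UNIV g" "\<And>x. f x \<le> g x"
  shows "m f \<le> m g"
proof -
  have "(\<lambda>x. max (f x) (g x)) = g" using assms(4) by (auto simp: max_def)
  then have "m g = max (m f) (m g)" using ip_max[OF assms(1-3)] by simp
  then show ?thesis by (metis max.cobounded1)
qed
lemma ip_le_const: assumes "m \<in> idem_prob" "continuous_on UNIV f" "\<And>x. f x \<le> c"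
  shows "m f \<le> c"
  using ip_mono[OF assms(1,2) continuous_on_const[of UNIV c]] assms(3) ip_const[OF assms(1)] by simp
lemma ip_ge_const: assumes "m \<in> idem_prob" "continuous_on UNIV f" "\<And>x. c \<le> f x"
  shows "c \<le> m f"
  using ip_mono[OF assms(1) continuous_on_const[of UNIV c] assms(2)] assms(3) ip_const[OF assms(1)] by simp
lemma ip_close: assumes "m \<in> idem_prob" "continuous_on UNIV f" "continuous_on UNIV g" "\<And>x. \<bar>f x - g x\<bar> \<le> e"
  shows "\<bar>m f - m g\<bar> \<le> e"
proof -
  have cg: "continuous_on UNIV (\<lambda>x. e + g x)" "continuous_on UNIV (\<lambda>x. e + f x)"
    using assms by (auto intro!: continuous_intros)
  have "m f \<le> m (\<lambda>x. e + g x)" by (rule ip_mono[OF assms(1,2) cg(1)]) (smt (verit) assms(4))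
  moreover have "m g \<le> m (\<lambda>x. e + f x)" by (rule ip_mono[OF assms(1,3) cg(2)]) (smt (verit) assms(4))
  ultimately show ?thesis using ip_transl[OF assms(1,2), of e] ip_transl[OF assms(1,3), of e] by (simp add: abs_le_iff)
qed

lemma summable_tau: assumes "0 \<le> \<tau>" "\<tau> < (1::real)"
  shows "(\<lambda>i::int. \<tau> ^ nat \<bar>i\<bar>) summable_on UNIV"
proof -
  have s: "(\<lambda>n::nat. \<tau> ^ n) summable_on UNIV"
    using assms by (subst summable_on_UNIV_nonneg_real_iff) (auto intro: summable_geometric)
  have s2: "(\<lambda>n::nat. \<tau> ^ Suc n) summable_on UNIV"
    using summable_on_cmult_right[OF s, of \<tau>] by simp
  have A: "(\<lambda>i::int. \<tau> ^ nat \<bar>i\<bar>) summable_on (int ` UNIV)"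
    by (subst summable_on_reindex) (auto simp: o_def s)
  have B: "(\<lambda>i::int. \<tau> ^ nat \<bar>i\<bar>) summable_on ((\<lambda>n. - int n - 1) ` UNIV)"
  proof (subst summable_on_reindex)
    show "inj_on (\<lambda>n. - int n - 1) UNIV" by (auto simp: inj_on_def)
    have "(\<lambda>n. \<tau> ^ nat \<bar>- int n - 1\<bar>) = (\<lambda>n::nat. \<tau> ^ Suc n)"
      by (auto simp: nat_add_distrib)
    then show "((\<lambda>i::int. \<tau> ^ nat \<bar>i\<bar>) \<circ> (\<lambda>n. - int n - 1)) summable_on UNIV" using s2 by (simp add: o_def)
  qed
  have U: "UNIV = int ` UNIV \<union> (\<lambda>n. - int n - 1) ` UNIV"
  proof -
    { fix i :: int assume "i \<notin> int ` UNIV"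
      then have "i < 0" by (metis nonneg_int_cases not_le rangeI)
      then have "i = - int (nat (-i-1)) - 1" by simp
      then have "i \<in> (\<lambda>n. - int n - 1) ` UNIV" by blast }
    then show ?thesis by blast
  qed
  have D: "int ` UNIV \<inter> (\<lambda>n. - int n - 1) ` UNIV = {}" by auto
  show ?thesis by (subst U) (rule summable_on_Un_disjoint[OF A B D])
qed

lemma sup_add_const:
  fixes g :: "'b \<Rightarrow> real"
  assumes "A \<noteq> {}" "bdd_above (g ` A)"
  shows "(SUP x\<in>A. a + g x) = a + (SUP x\<in>A. g x)"
proof (rule antisym)
  have u: "g x \<le> (SUP x\<in>A. g x)" if "x \<in> A" for x using cSUP_upper[OF that assms(2)] .
  show "(SUP x\<in>A. a + g x) \<le> a + (SUP x\<in>A. g x)"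
    using assms(1) by (rule cSUP_least) (use u in simp)
  obtain M where M: "\<And>x. x \<in> A \<Longrightarrow> g x \<le> M" using assms(2) by (auto simp: bdd_above_def)
  have b: "bdd_above ((\<lambda>x. a + g x) ` A)" by (rule bdd_aboveI[where M="a+M"]) (use M in auto)
  have u2: "a + g x \<le> (SUP x\<in>A. a + g x)" if "x \<in> A" for x using cSUP_upper[OF that b] .
  have "(SUP x\<in>A. g x) \<le> (SUP x\<in>A. a + g x) - a"
    using assms(1) by (rule cSUP_least) (use u2 in force)
  then show "a + (SUP x\<in>A. g x) \<le> (SUP x\<in>A. a + g x)" by simp
qed

lemma sup_max:
  fixes g h :: "'b \<Rightarrow> real"
  assumes "A \<noteq> {}" "bdd_above (g ` A)" "bdd_above (h ` A)"
  shows "(SUP x\<in>A. max (g x) (h x)) = max (SUP x\<in>A. g x) (SUP x\<in>A. h x)"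
proof -
  obtain M where M: "\<And>x. x \<in> A \<Longrightarrow> g x \<le> M" using assms(2) by (auto simp: bdd_above_def)
  obtain N where N: "\<And>x. x \<in> A \<Longrightarrow> h x \<le> N" using assms(3) by (auto simp: bdd_above_def)
  have b: "bdd_above ((\<lambda>x. max (g x) (h x)) ` A)"
    by (rule bdd_aboveI[where M="max M N"]) (use M N in \<open>force simp: le_max_iff_disj\<close>)
  have ug: "g x \<le> (SUP x\<in>A. g x)" if "x \<in> A" for x using cSUP_upper[OF that assms(2)] .
  have uh: "h x \<le> (SUP x\<in>A. h x)" if "x \<in> A" for x using cSUP_upper[OF that assms(3)] .
  show ?thesis
  proof (rule antisym)
    show "(SUP x\<in>A. max (g x) (h x)) \<le> max (SUP x\<in>A. g x) (SUP x\<in>A. h x)"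
      using assms(1) by (rule cSUP_least) (use ug uh in \<open>force simp: le_max_iff_disj\<close>)
    have "(SUP x\<in>A. g x) \<le> (SUP x\<in>A. max (g x) (h x))"
      using assms(1) b by (rule cSUP_mono) (use max.cobounded1 max.cobounded2 in blast)
    moreover have "(SUP x\<in>A. h x) \<le> (SUP x\<in>A. max (g x) (h x))"
      using assms(1) b by (rule cSUP_mono) (use max.cobounded1 max.cobounded2 in blast)
    ultimately show "max (SUP x\<in>A. g x) (SUP x\<in>A. h x) \<le> (SUP x\<in>A. max (g x) (h x))" by simp
  qed
qed

locale setting =
  fixes \<phi> :: "nat \<Rightarrow> 'a::metric_space \<Rightarrow> 'a" and q :: "nat \<Rightarrow> real"
    and \<gamma> \<tau> D :: real
  assumes X_compact: "compact (UNIV :: 'a set)"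
    and \<gamma>: "0 < \<gamma>" "\<gamma> < 1"
    and \<phi>_contr: "\<And>j x1 x2. dist (\<phi> j x1) (\<phi> j x2) \<le> \<gamma> * dist x1 x2"
    and q_nonpos: "\<And>j. q j \<le> 0"
    and q_sup: "(SUP j. q j) = 0"
    and \<tau>: "\<gamma> < \<tau>" "\<tau> < 1"
    and Dbd: "\<And>x y::'a. dist x y \<le> D"
begin

lemma D_nonneg: "0 \<le> D" using Dbd[of undefined undefined] by simp

lemma \<phi>_lip: "\<gamma>-lipschitz_on UNIV (\<phi> j)"
  using \<phi>_contr \<gamma> by (auto intro: lipschitz_onI)

lemma \<phi>_cont: "continuous_on UNIV (\<phi> j)"
  using \<phi>_lip by (rule lipschitz_on_continuous_on)

lemma comp_cont: "continuous_on UNIV f \<Longrightarrow> continuous_on UNIV (f \<circ> \<phi> j)"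
  by (metis \<phi>_cont continuous_on_compose continuous_on_subset top_greatest)

lemma cont_bdd: assumes "continuous_on UNIV (f::'a \<Rightarrow> real)"
  obtains B where "\<And>x. \<bar>f x\<bar> \<le> B"
proof -
  have "compact (f ` UNIV)" using compact_continuous_image[OF assms X_compact] .
  then have "bounded (f ` UNIV)" by (rule compact_imp_bounded)
  then obtain B where "\<And>x. norm (f x) \<le> B" unfolding bounded_iff by blast
  then show ?thesis using that by auto
qed

lemma bdd_q: "bdd_above (range q)" by (rule bdd_aboveI[where M=0]) (auto intro: q_nonpos)

lemma M_bdd: assumes "\<mu> \<in> idem_prob" "continuous_on UNIV f"
  shows "bdd_above (range (\<lambda>j. q j + \<mu> (f \<circ> \<phi> j)))"
proof -
  obtain B where B: "\<And>x. \<bar>f x\<bar> \<le> B" using cont_bdd[OF assms(2)] by blast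
  have "q j + \<mu> (f \<circ> \<phi> j) \<le> B" for j
    using ip_le_const[OF assms(1) comp_cont[OF assms(2)], where c=B] B q_nonpos[of j]
    by (smt (verit) abs_le_iff comp_apply)
  then show ?thesis by (intro bdd_aboveI[where M=B]) auto
qed

lemma M_app: "continuous_on UNIV f \<Longrightarrow> M_op \<phi> q \<mu> f = (SUP j. q j + \<mu> (f \<circ> \<phi> j))"
  by (simp add: M_op_def)

lemma M_in: assumes "\<mu> \<in> idem_prob" shows "M_op \<phi> q \<mu> \<in> idem_prob"
  unfolding idem_prob_def
proof (intro CollectI conjI allI impI)
  fix a f assume f: "continuous_on UNIV (f::'a\<Rightarrow>real)"
  have f': "continuous_on UNIV (\<lambda>x. a + f x)" using f by (auto intro!: continuous_intros)
  have "M_op \<phi> q \<mu> (\<lambda>x. a + f x) = (SUP j. q j + \<mu> ((\<lambda>x. a + f x) \<circ> \<phi> j))" by (rule M_app[OF f'])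
  also have "\<dots> = (SUP j. a + (q j + \<mu> (f \<circ> \<phi> j)))"
  proof -
    have "\<mu> ((\<lambda>x. a + f x) \<circ> \<phi> j) = a + \<mu> (f \<circ> \<phi> j)" for j
      using ip_transl[OF assms comp_cont[OF f, of j], of a] by (simp add: o_def)
    then show ?thesis by (simp add: algebra_simps)
  qed
  also have "\<dots> = a + (SUP j. q j + \<mu> (f \<circ> \<phi> j))"
    by (rule sup_add_const) (use M_bdd[OF assms f] in auto)
  finally show "M_op \<phi> q \<mu> (\<lambda>x. a + f x) = a + M_op \<phi> q \<mu> f" using M_app[OF f] by simp
next
  fix f g assume f: "continuous_on UNIV (f::'a\<Rightarrow>real)" and g: "continuous_on UNIV (g::'a\<Rightarrow>real)"
  have fg: "continuous_on UNIV (\<lambda>x. max (f x) (g x))" using f g by (auto intro!: continuous_intros)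
  have "M_op \<phi> q \<mu> (\<lambda>x. max (f x) (g x)) = (SUP j. q j + \<mu> ((\<lambda>x. max (f x) (g x)) \<circ> \<phi> j))" by (rule M_app[OF fg])
  also have "\<dots> = (SUP j. max (q j + \<mu> (f \<circ> \<phi> j)) (q j + \<mu> (g \<circ> \<phi> j)))"
  proof -
    have "\<mu> ((\<lambda>x. max (f x) (g x)) \<circ> \<phi> j) = max (\<mu> (f \<circ> \<phi> j)) (\<mu> (g \<circ> \<phi> j))" for j
      using ip_max[OF assms comp_cont[OF f, of j] comp_cont[OF g, of j]] by (simp add: o_def)
    then show ?thesis by (simp add: max_add_distrib_right)
  qed
  also have "\<dots> = max (SUP j. q j + \<mu> (f \<circ> \<phi> j)) (SUP j. q j + \<mu> (g \<circ> \<phi> j))"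
    by (rule sup_max) (use M_bdd[OF assms f] M_bdd[OF assms g] in auto)
  finally show "M_op \<phi> q \<mu> (\<lambda>x. max (f x) (g x)) = max (M_op \<phi> q \<mu> f) (M_op \<phi> q \<mu> g)"
    using M_app[OF f] M_app[OF g] by simp
next
  show "M_op \<phi> q \<mu> (\<lambda>x. 0) = 0"
    using M_app[of "\<lambda>x. 0" \<mu>] ip_zero[OF assms] q_sup by (simp add: o_def)
next
  fix f assume "\<not> continuous_on UNIV (f::'a\<Rightarrow>real)"
  then show "M_op \<phi> q \<mu> f = 0" by (simp add: M_op_def)
qed

end

lemma dlip_sym: "d_lip a \<mu> \<nu> = d_lip a \<nu> \<mu>"
  by (simp add: d_lip_def abs_minus_commute)

lemma dlip_leI:
  assumes "0 \<le> a" "\<And>g. a-lipschitz_on UNIV g \<Longrightarrow> \<bar>\<mu> g - \<nu> g\<bar> \<le> C"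
  shows "d_lip a \<mu> \<nu> \<le> C"
  unfolding d_lip_def
proof (rule cSup_least)
  have "a-lipschitz_on UNIV (\<lambda>x::'a. 0::real)" using assms(1) by (intro lipschitz_onI) auto
  then show "{\<bar>\<mu> g - \<nu> g\<bar> |g. a-lipschitz_on UNIV g} \<noteq> {}" by blast
qed (use assms(2) in blast)

lemma dlip_ge:
  assumes "\<And>g. a-lipschitz_on UNIV g \<Longrightarrow> \<bar>\<mu> g - \<nu> g\<bar> \<le> C" "a-lipschitz_on UNIV g"
  shows "\<bar>\<mu> g - \<nu> g\<bar> \<le> d_lip a \<mu> \<nu>"
  unfolding d_lip_def
proof (rule cSup_upper)
  show "bdd_above {\<bar>\<mu> g - \<nu> g\<bar> |g. a-lipschitz_on UNIV g}"
    by (rule bdd_aboveI[where M=C]) (use assms(1) in blast)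
qed (use assms(2) in blast)

lemma dlip_nonneg:
  assumes "0 \<le> a" "\<And>g. a-lipschitz_on UNIV g \<Longrightarrow> \<bar>\<mu> g - \<nu> g\<bar> \<le> C"
  shows "0 \<le> d_lip a \<mu> \<nu>"
proof -
  have l: "a-lipschitz_on UNIV (\<lambda>x::'a. 0::real)" using assms(1) by (intro lipschitz_onI) auto
  have "\<bar>\<mu> (\<lambda>x. 0) - \<nu> (\<lambda>x. 0)\<bar> \<le> d_lip a \<mu> \<nu>"
    by (rule dlip_ge[where C=C], rule assms(2), assumption, rule l)
  then show ?thesis by simp
qed

context setting begin

lemma elem_bound:
  fixes \<mu> \<nu> :: "('a \<Rightarrow> real) \<Rightarrow> real"
  fixes g :: "'a \<Rightarrow> real"
  assumes "\<mu> \<in> idem_prob" "\<nu> \<in> idem_prob" "a-lipschitz_on UNIV g"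
  shows "\<bar>\<mu> g - \<nu> g\<bar> \<le> 2 * a * D"
proof -
  have a: "0 \<le> a" using lipschitz_on_nonneg[OF assms(3)] .
  have gc: "continuous_on UNIV g" using lipschitz_on_continuous_on[OF assms(3)] .
  define c where "c = g undefined"
  have b: "\<bar>g x - c\<bar> \<le> a * D" for x
  proof -
    have "dist (g x) c \<le> a * dist x undefined" unfolding c_def using lipschitz_onD[OF assms(3)] by simp
    also have "\<dots> \<le> a * D" using mult_left_mono[OF Dbd[of x undefined] a] .
    finally show ?thesis by (simp add: dist_real_def)
  qed
  have b1: "g x \<le> c + a * D" and b2: "c - a * D \<le> g x" for x using b[of x] by (auto simp: abs_le_iff)
  have "c - a * D \<le> \<mu> g" by (rule ip_ge_const[OF assms(1) gc b2])
  moreover have "\<mu> g \<le> c + a * D" by (rule ip_le_const[OF assms(1) gc b1])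
  moreover have "c - a * D \<le> \<nu> g" by (rule ip_ge_const[OF assms(2) gc b2])
  moreover have "\<nu> g \<le> c + a * D" by (rule ip_le_const[OF assms(2) gc b1])
  ultimately have "\<bar>\<mu> g - \<nu> g\<bar> \<le> (c + a * D) - (c - a * D)" unfolding abs_le_iff by linarith
  then show ?thesis by linarith
qed

lemma dlip_le:
  fixes \<mu> \<nu> :: "('a \<Rightarrow> real) \<Rightarrow> real"
  shows "\<mu> \<in> idem_prob \<Longrightarrow> \<nu> \<in> idem_prob \<Longrightarrow> 0 \<le> a \<Longrightarrow> d_lip a \<mu> \<nu> \<le> 2 * a * D"
  by (rule dlip_leI, assumption, rule elem_bound)

lemma dlip_ge':
  fixes \<mu> \<nu> :: "('a \<Rightarrow> real) \<Rightarrow> real"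
  shows "\<mu> \<in> idem_prob \<Longrightarrow> \<nu> \<in> idem_prob \<Longrightarrow> a-lipschitz_on UNIV g \<Longrightarrow>
    \<bar>\<mu> g - \<nu> g\<bar> \<le> d_lip a \<mu> \<nu>"
  by (rule dlip_ge[where C="2*a*D"], rule elem_bound)

lemma dlip_nonneg':
  fixes \<mu> \<nu> :: "('a \<Rightarrow> real) \<Rightarrow> real"
  shows "\<mu> \<in> idem_prob \<Longrightarrow> \<nu> \<in> idem_prob \<Longrightarrow> 0 \<le> a \<Longrightarrow> 0 \<le> d_lip a \<mu> \<nu>"
  by (rule dlip_nonneg[where C="2*a*D"], assumption, rule elem_bound)

lemma M_half:
  fixes \<mu> \<nu> :: "('a \<Rightarrow> real) \<Rightarrow> real"
  assumes "\<mu> \<in> idem_prob" "\<nu> \<in> idem_prob" "a-lipschitz_on UNIV g"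
  shows "M_op \<phi> q \<mu> g \<le> M_op \<phi> q \<nu> g + d_lip (\<gamma> * a) \<mu> \<nu>"
proof -
  have gc: "continuous_on UNIV g" using lipschitz_on_continuous_on[OF assms(3)] .
  have lj: "(\<gamma> * a)-lipschitz_on UNIV (g \<circ> \<phi> j)" for j
  proof -
    have "(a * \<gamma>)-lipschitz_on UNIV (g \<circ> \<phi> j)"
      by (rule lipschitz_on_compose[OF \<phi>_lip]) (rule lipschitz_on_subset[OF assms(3)], simp)
    then show ?thesis by (simp add: mult.commute)
  qed
  have "q j + \<mu> (g \<circ> \<phi> j) \<le> (SUP j. q j + \<nu> (g \<circ> \<phi> j)) + d_lip (\<gamma> * a) \<mu> \<nu>" for j
  proof -
    have "\<mu> (g \<circ> \<phi> j) \<le> \<nu> (g \<circ> \<phi> j) + d_lip (\<gamma> * a) \<mu> \<nu>"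
      using dlip_ge'[OF assms(1,2) lj[of j]] by linarith
    moreover have "q j + \<nu> (g \<circ> \<phi> j) \<le> (SUP j. q j + \<nu> (g \<circ> \<phi> j))"
      using cSUP_upper[OF _ M_bdd[OF assms(2) gc]] by simp
    ultimately show ?thesis by linarith
  qed
  then have "(SUP j. q j + \<mu> (g \<circ> \<phi> j)) \<le> (SUP j. q j + \<nu> (g \<circ> \<phi> j)) + d_lip (\<gamma> * a) \<mu> \<nu>"
    by (intro cSUP_least) auto
  then show ?thesis using M_app[OF gc] by simp
qed

lemma key:
  fixes \<mu> \<nu> :: "('a \<Rightarrow> real) \<Rightarrow> real"
  assumes "\<mu> \<in> idem_prob" "\<nu> \<in> idem_prob" "0 \<le> a"
  shows "d_lip a (M_op \<phi> q \<mu>) (M_op \<phi> q \<nu>) \<le> d_lip (\<gamma> * a) \<mu> \<nu>"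
proof (rule dlip_leI[OF assms(3)])
  fix g :: "'a \<Rightarrow> real" assume g: "a-lipschitz_on UNIV g"
  show "\<bar>M_op \<phi> q \<mu> g - M_op \<phi> q \<nu> g\<bar> \<le> d_lip (\<gamma> * a) \<mu> \<nu>"
    using M_half[OF assms(1,2) g] M_half[OF assms(2,1) g]
    by (simp add: dlip_sym abs_le_iff)
qed

end

definition tt :: "real \<Rightarrow> real \<Rightarrow> (('a::metric_space \<Rightarrow> real) \<Rightarrow> real)
    \<Rightarrow> (('a \<Rightarrow> real) \<Rightarrow> real) \<Rightarrow> int \<Rightarrow> real" where
  "tt \<beta> \<tau> \<mu> \<nu> i = \<tau> ^ nat \<bar>i\<bar> / \<beta> powi i * d_lip (\<beta> powi i) \<mu> \<nu>"

lemma d_tilde_tt: "d_tilde \<beta> \<tau> \<mu> \<nu> = infsum (tt \<beta> \<tau> \<mu> \<nu>) UNIV"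
  unfolding d_tilde_def tt_def ..

context setting begin

lemma pw: "\<gamma> powi (i+1) = \<gamma> * \<gamma> powi i"
  using \<gamma> by (simp add: power_int_add_1')

lemma tau_sum: "(\<lambda>i::int. C * \<tau> ^ nat \<bar>i\<bar>) summable_on UNIV"
  using summable_on_cmult_right[OF summable_tau] \<gamma> \<tau> by simp

lemma tt_bounds:
  fixes \<mu> \<nu> :: "('a \<Rightarrow> real) \<Rightarrow> real"
  assumes "\<mu> \<in> idem_prob" "\<nu> \<in> idem_prob"
  shows "0 \<le> tt \<gamma> \<tau> \<mu> \<nu> i" "tt \<gamma> \<tau> \<mu> \<nu> i \<le> 2 * D * \<tau> ^ nat \<bar>i\<bar>"
proof -
  define g where "g = \<gamma> powi i"
  have g: "0 < g" unfolding g_def using \<gamma> by simp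
  have tp: "0 \<le> \<tau> ^ nat \<bar>i\<bar>" using \<gamma> \<tau> by simp
  have d0: "0 \<le> d_lip g \<mu> \<nu>" using dlip_nonneg'[OF assms] g by simp
  have d1: "d_lip g \<mu> \<nu> \<le> 2 * g * D" using dlip_le[OF assms] g by simp
  show "0 \<le> tt \<gamma> \<tau> \<mu> \<nu> i" unfolding tt_def g_def[symmetric] using g tp d0 by simp
  have "tt \<gamma> \<tau> \<mu> \<nu> i \<le> \<tau> ^ nat \<bar>i\<bar> / g * (2 * g * D)"
    unfolding tt_def g_def[symmetric] by (rule mult_left_mono[OF d1]) (use g tp in simp)
  also have "\<dots> = 2 * D * \<tau> ^ nat \<bar>i\<bar>" using g by (simp add: field_simps)
  finally show "tt \<gamma> \<tau> \<mu> \<nu> i \<le> 2 * D * \<tau> ^ nat \<bar>i\<bar>" .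
qed

lemma tt_summable:
  fixes \<mu> \<nu> :: "('a \<Rightarrow> real) \<Rightarrow> real"
  assumes "\<mu> \<in> idem_prob" "\<nu> \<in> idem_prob"
  shows "tt \<gamma> \<tau> \<mu> \<nu> summable_on UNIV"
  by (rule summable_on_comparison_test[OF tau_sum]) (use tt_bounds[OF assms] in auto)

lemma dtilde_nonneg:
  fixes \<mu> \<nu> :: "('a \<Rightarrow> real) \<Rightarrow> real"
  assumes "\<mu> \<in> idem_prob" "\<nu> \<in> idem_prob"
  shows "0 \<le> d_tilde \<gamma> \<tau> \<mu> \<nu>"
  unfolding d_tilde_tt by (rule infsum_nonneg) (use tt_bounds[OF assms] in auto)

lemma contraction:
  fixes \<mu> \<nu> :: "('a \<Rightarrow> real) \<Rightarrow> real"
  assumes "\<mu> \<in> idem_prob" "\<nu> \<in> idem_prob"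
  shows "d_tilde \<gamma> \<tau> (M_op \<phi> q \<mu>) (M_op \<phi> q \<nu>) \<le> \<gamma> / \<tau> * d_tilde \<gamma> \<tau> \<mu> \<nu>"
proof -
  define s where "s i = \<tau> ^ nat \<bar>i\<bar> / \<gamma> powi i * d_lip (\<gamma> powi (i+1)) \<mu> \<nu>" for i :: int
  have tp: "0 \<le> \<tau> ^ n" for n using \<gamma> \<tau> by simp
  have sb: "0 \<le> s i \<and> s i \<le> 2 * \<gamma> * D * \<tau> ^ nat \<bar>i\<bar>" for i
  proof -
    define g where "g = \<gamma> powi i"
    have g: "0 < g" unfolding g_def using \<gamma> by simp
    have d0: "0 \<le> d_lip (\<gamma> * g) \<mu> \<nu>" using dlip_nonneg'[OF assms] g \<gamma> by simp
    have d1: "d_lip (\<gamma> * g) \<mu> \<nu> \<le> 2 * (\<gamma> * g) * D" using dlip_le[OF assms] g \<gamma> by simp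
    have e: "s i = \<tau> ^ nat \<bar>i\<bar> / g * d_lip (\<gamma> * g) \<mu> \<nu>" unfolding s_def g_def pw ..
    have "s i \<le> \<tau> ^ nat \<bar>i\<bar> / g * (2 * (\<gamma> * g) * D)"
      unfolding e by (rule mult_left_mono[OF d1]) (use g tp in simp)
    also have "\<dots> = 2 * \<gamma> * D * \<tau> ^ nat \<bar>i\<bar>" using g by (simp add: field_simps)
    finally show ?thesis unfolding e using g tp d0 by simp
  qed
  have s_sum: "s summable_on UNIV"
    by (rule summable_on_comparison_test[OF tau_sum]) (use sb in auto)
  have bij: "bij_betw (\<lambda>k::int. k - 1) UNIV UNIV"
    by (rule bij_betwI[where g="\<lambda>k. k + 1"]) auto
  have s'_sum: "(\<lambda>k. s (k - 1)) summable_on UNIV"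
    using summable_on_reindex_bij_betw[OF bij, of s] s_sum by simp
  have Mm: "M_op \<phi> q \<mu> \<in> idem_prob" "M_op \<phi> q \<nu> \<in> idem_prob" using M_in assms by auto
  have "d_tilde \<gamma> \<tau> (M_op \<phi> q \<mu>) (M_op \<phi> q \<nu>) = infsum (tt \<gamma> \<tau> (M_op \<phi> q \<mu>) (M_op \<phi> q \<nu>)) UNIV"
    by (rule d_tilde_tt)
  also have "\<dots> \<le> infsum s UNIV"
  proof (rule infsum_mono[OF tt_summable[OF Mm] s_sum])
    fix i :: int
    define g where "g = \<gamma> powi i"
    have g: "0 < g" unfolding g_def using \<gamma> by simp
    have "d_lip g (M_op \<phi> q \<mu>) (M_op \<phi> q \<nu>) \<le> d_lip (\<gamma> * g) \<mu> \<nu>"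
      using key[OF assms, of g] g by simp
    then have "\<tau> ^ nat \<bar>i\<bar> / g * d_lip g (M_op \<phi> q \<mu>) (M_op \<phi> q \<nu>) \<le> \<tau> ^ nat \<bar>i\<bar> / g * d_lip (\<gamma> * g) \<mu> \<nu>"
      by (rule mult_left_mono) (use g tp in simp)
    then show "tt \<gamma> \<tau> (M_op \<phi> q \<mu>) (M_op \<phi> q \<nu>) i \<le> s i"
      unfolding tt_def s_def g_def pw .
  qed
  also have "\<dots> = infsum (\<lambda>k. s (k - 1)) UNIV"
    using infsum_reindex_bij_betw[OF bij, of s] by simp
  also have "\<dots> \<le> infsum (\<lambda>k. \<gamma> / \<tau> * tt \<gamma> \<tau> \<mu> \<nu> k) UNIV"
  proof (rule infsum_mono[OF s'_sum summable_on_cmult_right[OF tt_summable[OF assms]]])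
    fix k :: int
    define g where "g = \<gamma> powi k"
    define d where "d = d_lip g \<mu> \<nu>"
    define n1 where "n1 = nat \<bar>k - 1\<bar>"
    define n where "n = nat \<bar>k\<bar>"
    have g: "0 < g" unfolding g_def using \<gamma> by simp
    have d: "0 \<le> d" unfolding d_def using dlip_nonneg'[OF assms] g by simp
    have gk: "\<gamma> powi (k - 1) = g / \<gamma>" unfolding g_def using \<gamma> by (simp add: power_int_diff)
    have e1: "s (k - 1) = (\<tau> * \<tau> ^ n1) * (\<gamma> / (\<tau> * g) * d)"
      unfolding s_def gk n1_def[symmetric] using g \<gamma> \<tau> by (simp add: d_def g_def field_simps)
    have e2: "\<gamma> / \<tau> * tt \<gamma> \<tau> \<mu> \<nu> k = \<tau> ^ n * (\<gamma> / (\<tau> * g) * d)"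
      unfolding tt_def g_def[symmetric] d_def[symmetric] n_def[symmetric] using g \<gamma> \<tau> by (simp add: field_simps)
    have "\<tau> ^ Suc n1 \<le> \<tau> ^ n"
      by (rule power_decreasing) (use \<gamma> \<tau> in \<open>auto simp: n_def n1_def\<close>)
    then have "(\<tau> * \<tau> ^ n1) * (\<gamma> / (\<tau> * g) * d) \<le> \<tau> ^ n * (\<gamma> / (\<tau> * g) * d)"
      by (intro mult_right_mono) (use g d \<gamma> \<tau> in auto)
    then show "s (k - 1) \<le> \<gamma> / \<tau> * tt \<gamma> \<tau> \<mu> \<nu> k" using e1 e2 by simp
  qed
  also have "\<dots> = \<gamma> / \<tau> * infsum (tt \<gamma> \<tau> \<mu> \<nu>) UNIV"
    by (rule infsum_cmult_right) (use tt_summable[OF assms] in auto)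
  also have "\<dots> = \<gamma> / \<tau> * d_tilde \<gamma> \<tau> \<mu> \<nu>" by (simp add: d_tilde_tt)
  finally show ?thesis .
qed

end

context setting begin

lemma lip_approx:
  fixes f :: "'a \<Rightarrow> real"
  assumes f: "continuous_on UNIV f" and e: "0 < e"
  shows "\<exists>L g. L-lipschitz_on UNIV g \<and> (\<forall>x. \<bar>f x - g x\<bar> \<le> e)"
proof -
  obtain B where B: "\<And>x. \<bar>f x\<bar> \<le> B" using cont_bdd[OF f] by blast
  have "uniformly_continuous_on UNIV f" by (rule compact_uniformly_continuous[OF f X_compact])
  then obtain \<delta> where \<delta>: "0 < \<delta>" and uc: "\<And>x x'. dist x' x < \<delta> \<Longrightarrow> dist (f x') (f x) < e"
    unfolding uniformly_continuous_on_def using e by blast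
  obtain n :: nat where n: "2 * B / \<delta> \<le> real n" using real_arch_simple by blast
  define L where "L = real n"
  have L0: "0 \<le> L" unfolding L_def by simp
  have L\<delta>: "2 * B \<le> L * \<delta>" using n \<delta> unfolding L_def by (simp add: field_simps)
  define g where "g x = (INF y. f y + L * dist x y)" for x
  have bb: "bdd_below (range (\<lambda>y. f y + L * dist x y))" for x
  proof (rule bdd_belowI[where m="-B"])
    fix z assume "z \<in> range (\<lambda>y. f y + L * dist x y)"
    then obtain y where "z = f y + L * dist x y" by blast
    moreover have "0 \<le> L * dist x y" using L0 by simp
    moreover have "-B \<le> f y" using B[of y] by linarith
    ultimately show "-B \<le> z" by linarith
  qed
  have gle: "g x \<le> f y + L * dist x y" for x y
    unfolding g_def by (rule cINF_lower[OF bb]) simp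
  have lip: "L-lipschitz_on UNIV g"
  proof (rule lipschitz_onI[OF _ L0])
    have h: "g x \<le> g x' + L * dist x x'" for x x'
    proof -
      have "g x - L * dist x x' \<le> f y + L * dist x' y" for y
      proof -
        have "L * dist x y \<le> L * (dist x x' + dist x' y)"
          by (rule mult_left_mono[OF dist_triangle L0])
        then have "L * dist x y \<le> L * dist x x' + L * dist x' y"
          by (simp only: distrib_left)
        then show ?thesis using gle[of x y] by linarith
      qed
      then have "g x - L * dist x x' \<le> g x'" unfolding g_def[of x'] by (intro cINF_greatest) auto
      then show ?thesis by simp
    qed
    fix x x' :: 'a
    show "dist (g x) (g x') \<le> L * dist x x'"
      using h[of x x'] h[of x' x] by (simp add: dist_real_def dist_commute abs_le_iff)
  qed
  have close: "\<bar>f x - g x\<bar> \<le> e" for x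
  proof -
    have up: "g x \<le> f x" using gle[of x x] by simp
    have "f x - e \<le> f y + L * dist x y" for y
    proof (cases "dist y x < \<delta>")
      case True
      then have "dist (f y) (f x) < e" by (rule uc)
      then have "f x - e \<le> f y" by (simp add: dist_real_def abs_less_iff)
      moreover have "0 \<le> L * dist x y" using L0 by simp
      ultimately show ?thesis by linarith
    next
      case False
      then have "\<delta> \<le> dist x y" by (simp add: dist_commute)
      then have "L * \<delta> \<le> L * dist x y" using L0 by (rule mult_left_mono)
      then show ?thesis using L\<delta> B[of x] B[of y] e by (simp add: abs_le_iff)
    qed
    then have "f x - e \<le> g x" unfolding g_def by (intro cINF_greatest) auto
    then show ?thesis using up by (simp add: abs_le_iff)
  qed
  show ?thesis using lip close by blast
qed

lemma eq_of_dlip0: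
  fixes \<mu> \<nu> :: "('a \<Rightarrow> real) \<Rightarrow> real"
  assumes m: "\<mu> \<in> idem_prob" "\<nu> \<in> idem_prob" and z: "\<And>i::int. d_lip (\<gamma> powi i) \<mu> \<nu> = 0"
  shows "\<mu> = \<nu>"
proof
  fix f :: "'a \<Rightarrow> real"
  show "\<mu> f = \<nu> f"
  proof (cases "continuous_on UNIV f")
    case False
    then show ?thesis using ip_noncont m by metis
  next
    case f: True
    have "\<bar>\<mu> f - \<nu> f\<bar> \<le> 2 * e" if e: "0 < e" for e
    proof -
      obtain L g where Lg: "L-lipschitz_on UNIV g" and c: "\<And>x. \<bar>f x - g x\<bar> \<le> e"
        using lip_approx[OF f e] by blast
      have gc: "continuous_on UNIV g" using lipschitz_on_continuous_on[OF Lg] .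
      have "1 < 1 / \<gamma>" using \<gamma> by simp
      then obtain n where n: "L < (1 / \<gamma>) ^ n" using real_arch_pow by blast
      have "\<gamma> powi (- int n) = (1 / \<gamma>) ^ n"
        by (simp add: power_int_minus power_one_over inverse_eq_divide)
      then have "(\<gamma> powi (- int n))-lipschitz_on UNIV g"
        using lipschitz_on_mono[OF Lg, of UNIV] n by simp
      then have "\<bar>\<mu> g - \<nu> g\<bar> \<le> d_lip (\<gamma> powi (- int n)) \<mu> \<nu>" by (rule dlip_ge'[OF m])
      then have "\<bar>\<mu> g - \<nu> g\<bar> \<le> 0" using z[of "- int n"] by simp
      moreover have "\<bar>\<mu> f - \<mu> g\<bar> \<le> e" by (rule ip_close[OF m(1) f gc c])
      moreover have "\<bar>\<nu> f - \<nu> g\<bar> \<le> e" by (rule ip_close[OF m(2) f gc c])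
      ultimately show ?thesis unfolding abs_le_iff by linarith
    qed
    note P = this
    have "\<bar>\<mu> f - \<nu> f\<bar> \<le> 0"
    proof (rule field_le_epsilon)
      fix e :: real assume "0 < e"
      then have "\<bar>\<mu> f - \<nu> f\<bar> \<le> 2 * (e / 2)" by (intro P) simp
      then show "\<bar>\<mu> f - \<nu> f\<bar> \<le> 0 + e" by simp
    qed
    then show ?thesis by simp
  qed
qed

lemma dtilde0:
  fixes \<mu> \<nu> :: "('a \<Rightarrow> real) \<Rightarrow> real"
  assumes m: "\<mu> \<in> idem_prob" "\<nu> \<in> idem_prob" and z: "d_tilde \<gamma> \<tau> \<mu> \<nu> = 0"
  shows "\<mu> = \<nu>"
proof (rule eq_of_dlip0[OF m])
  fix i :: int
  have "infsum (tt \<gamma> \<tau> \<mu> \<nu>) {i} \<le> infsum (tt \<gamma> \<tau> \<mu> \<nu>) UNIV"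
    by (rule infsum_mono_neutral) (auto simp: tt_summable[OF m] tt_bounds[OF m])
  then have le: "tt \<gamma> \<tau> \<mu> \<nu> i \<le> 0" using z by (simp add: d_tilde_tt)
  have g: "0 < \<gamma> powi i" using \<gamma> by simp
  have t: "0 < \<tau> ^ nat \<bar>i\<bar>" using \<gamma> \<tau> by simp
  have d0: "0 \<le> d_lip (\<gamma> powi i) \<mu> \<nu>" using dlip_nonneg'[OF m] g by simp
  have "\<tau> ^ nat \<bar>i\<bar> / \<gamma> powi i * d_lip (\<gamma> powi i) \<mu> \<nu> \<le> 0" using le by (simp add: tt_def)
  then have "\<tau> ^ nat \<bar>i\<bar> / \<gamma> powi i * d_lip (\<gamma> powi i) \<mu> \<nu> \<le> \<tau> ^ nat \<bar>i\<bar> / \<gamma> powi i * 0" by simp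
  then have "d_lip (\<gamma> powi i) \<mu> \<nu> \<le> 0" using g t by (subst (asm) mult_le_cancel_left_pos) auto
  then show "d_lip (\<gamma> powi i) \<mu> \<nu> = 0" using d0 by simp
qed

end



primrec cw :: "(nat \<Rightarrow> 'a \<Rightarrow> 'a) \<Rightarrow> (nat \<Rightarrow> nat) \<Rightarrow> nat \<Rightarrow> 'a \<Rightarrow> 'a" where
  "cw \<phi> w 0 x = x"
| "cw \<phi> w (Suc n) x = \<phi> (w 0) (cw \<phi> (\<lambda>k. w (Suc k)) n x)"

lemma cw_add: "cw \<phi> w (n + k) x = cw \<phi> w n (cw \<phi> (\<lambda>i. w (i + n)) k x)"
proof (induction n arbitrary: w)
  case 0 then show ?case by simp
next
  case (Suc n)
  show ?case using Suc[of "\<lambda>k. w (Suc k)"] by simp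
qed

context setting begin

lemma cw_contr: "dist (cw \<phi> w n x) (cw \<phi> w n y) \<le> \<gamma> ^ n * dist x y"
proof (induction n arbitrary: w)
  case 0 then show ?case by simp
next
  case (Suc n)
  have "dist (cw \<phi> w (Suc n) x) (cw \<phi> w (Suc n) y) \<le> \<gamma> * dist (cw \<phi> (\<lambda>k. w (Suc k)) n x) (cw \<phi> (\<lambda>k. w (Suc k)) n y)"
    using \<phi>_contr by simp
  also have "\<dots> \<le> \<gamma> * (\<gamma> ^ n * dist x y)"
    using Suc[of "\<lambda>k. w (Suc k)"] \<gamma> by (intro mult_left_mono) auto
  finally show ?case by simp
qed

lemma cw_close: "n \<le> m \<Longrightarrow> dist (cw \<phi> w m x) (cw \<phi> w n y) \<le> \<gamma> ^ n * D"
proof -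
  assume "n \<le> m"
  then have "cw \<phi> w m x = cw \<phi> w n (cw \<phi> (\<lambda>i. w (i + n)) (m - n) x)"
    using cw_add[of \<phi> w n "m - n" x] by simp
  then have "dist (cw \<phi> w m x) (cw \<phi> w n y) \<le> \<gamma> ^ n * dist (cw \<phi> (\<lambda>i. w (i + n)) (m - n) x) y"
    using cw_contr by simp
  also have "\<dots> \<le> \<gamma> ^ n * D" using \<gamma> Dbd by (intro mult_left_mono) auto
  finally show ?thesis .
qed

lemma cw_Cauchy: "Cauchy (\<lambda>n. cw \<phi> w n x)"
proof (rule metric_CauchyI)
  fix e :: real assume e: "0 < e"
  have "0 < e / (D + 1)" using e D_nonneg by simp
  then obtain N where N: "\<gamma> ^ N < e / (D + 1)" using real_arch_pow_inv \<gamma> by blast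
  have "dist (cw \<phi> w m x) (cw \<phi> w n x) < e" if "N \<le> m" "N \<le> n" for m n
  proof -
    have gg: "\<gamma> ^ min m n \<le> \<gamma> ^ N" using that \<gamma> by (intro power_decreasing) auto
    have "dist (cw \<phi> w m x) (cw \<phi> w n x) \<le> \<gamma> ^ min m n * D"
    proof (cases "n \<le> m")
      case True then show ?thesis using cw_close[OF True, of w x x] D_nonneg \<gamma> by (simp add: min_def)
    next
      case False
      then have mn: "m \<le> n" by simp
      have "dist (cw \<phi> w n x) (cw \<phi> w m x) \<le> \<gamma> ^ m * D" by (rule cw_close[OF mn])
      then show ?thesis using mn by (simp add: min_def dist_commute)
    qed
    also have "\<dots> \<le> \<gamma> ^ N * (D + 1)" using gg D_nonneg \<gamma>
      by (meson less_add_one mult_mono order.strict_implies_order zero_le_power order_less_imp_le)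
    also have "\<dots> < e" using N D_nonneg by (simp add: field_simps)
    finally show ?thesis .
  qed
  then show "\<exists>M. \<forall>m\<ge>M. \<forall>n\<ge>M. dist (cw \<phi> w m x) (cw \<phi> w n x) < e" by blast
qed

definition "\<pi> w = lim (\<lambda>n. cw \<phi> w n undefined)"

lemma \<pi>_lim: "(\<lambda>n. cw \<phi> w n undefined) \<longlonglongrightarrow> \<pi> w"
proof -
  have "complete (UNIV :: 'a set)" by (rule compact_imp_complete[OF X_compact])
  then obtain l where "(\<lambda>n. cw \<phi> w n undefined) \<longlonglongrightarrow> l"
    using cw_Cauchy unfolding complete_def by blast
  then show ?thesis unfolding \<pi>_def using convergent_LIMSEQ_iff convergentI by blast
qed

lemma \<pi>_close: "dist (\<pi> w) (cw \<phi> w n y) \<le> \<gamma> ^ n * D"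
proof (rule LIMSEQ_le_const2)
  show "(\<lambda>m. dist (cw \<phi> w m undefined) (cw \<phi> w n y)) \<longlonglongrightarrow> dist (\<pi> w) (cw \<phi> w n y)"
    by (intro tendsto_intros \<pi>_lim)
  show "\<exists>N. \<forall>m\<ge>N. dist (cw \<phi> w m undefined) (cw \<phi> w n y) \<le> \<gamma> ^ n * D"
    using cw_close by blast
qed

lemma \<pi>_cons: "\<pi> (case_nat j w) = \<phi> j (\<pi> w)"
proof -
  have b: "dist (\<pi> (case_nat j w)) (\<phi> j (\<pi> w)) \<le> 2 * D * \<gamma> * \<gamma> ^ n" for n
  proof -
    have e: "cw \<phi> (case_nat j w) (Suc n) undefined = \<phi> j (cw \<phi> w n undefined)" by simp
    have "dist (\<pi> (case_nat j w)) (\<phi> j (\<pi> w)) \<le> dist (\<pi> (case_nat j w)) (cw \<phi> (case_nat j w) (Suc n) undefined)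
        + dist (\<phi> j (cw \<phi> w n undefined)) (\<phi> j (\<pi> w))"
      using dist_triangle[of "\<pi> (case_nat j w)" "\<phi> j (\<pi> w)" "cw \<phi> (case_nat j w) (Suc n) undefined"] e by simp
    also have "\<dots> \<le> \<gamma> ^ Suc n * D + \<gamma> * (\<gamma> ^ n * D)"
    proof (rule add_mono)
      show "dist (\<pi> (case_nat j w)) (cw \<phi> (case_nat j w) (Suc n) undefined) \<le> \<gamma> ^ Suc n * D" by (rule \<pi>_close)
      have "dist (\<phi> j (cw \<phi> w n undefined)) (\<phi> j (\<pi> w)) \<le> \<gamma> * dist (cw \<phi> w n undefined) (\<pi> w)" by (rule \<phi>_contr)
      also have "\<dots> \<le> \<gamma> * (\<gamma> ^ n * D)" using \<pi>_close[of w n undefined] \<gamma>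
        by (intro mult_left_mono) (auto simp: dist_commute)
      finally show "dist (\<phi> j (cw \<phi> w n undefined)) (\<phi> j (\<pi> w)) \<le> \<gamma> * (\<gamma> ^ n * D)" .
    qed
    also have "\<dots> = 2 * D * \<gamma> * \<gamma> ^ n" by (simp add: algebra_simps)
    finally show ?thesis .
  qed
  have "(\<lambda>n. 2 * D * \<gamma> * \<gamma> ^ n) \<longlonglongrightarrow> 2 * D * \<gamma> * 0"
    using \<gamma> by (intro tendsto_intros) auto
  then have "dist (\<pi> (case_nat j w)) (\<phi> j (\<pi> w)) \<le> 2 * D * \<gamma> * 0"
    by (rule LIMSEQ_le_const) (use b in auto)
  then show ?thesis by simp
qed


definition "W = {w. summable (\<lambda>k. q (w k))}"
definition "Q w = (\<Sum>k. q (w k))"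

lemma Q_nonpos: "w \<in> W \<Longrightarrow> Q w \<le> 0"
  unfolding W_def Q_def using suminf_le[of "\<lambda>k. q (w k)" "\<lambda>k. 0"] q_nonpos by simp

lemma W_cons: "w \<in> W \<Longrightarrow> case_nat j w \<in> W"
  unfolding W_def using summable_Suc_iff[of "\<lambda>k. q (case_nat j w k)"] by simp

lemma Q_cons: "w \<in> W \<Longrightarrow> Q (case_nat j w) = q j + Q w"
proof -
  assume w: "w \<in> W"
  have "summable (\<lambda>k. q (case_nat j w k))" using W_cons[OF w] unfolding W_def by simp
  from suminf_split_head[OF this] show ?thesis unfolding Q_def by simp
qed

lemma W_tail: "w \<in> W \<Longrightarrow> (\<lambda>k. w (Suc k)) \<in> W"
  unfolding W_def using summable_Suc_iff[of "\<lambda>k. q (w k)"] by simp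

lemma cons_tail: "case_nat (w 0) (\<lambda>k. w (Suc k)) = w"
  by (rule ext) (simp split: nat.split)

lemma W_approx: assumes e: "0 < e" shows "\<exists>w\<in>W. - e \<le> Q w"
proof -
  have "\<exists>j. - (e * (1/2) ^ Suc k) < q j" for k
  proof -
    have "- (e * (1/2) ^ Suc k) < (SUP j. q j)" using q_sup e by simp
    then show ?thesis using less_cSUP_iff[OF _ bdd_q] by auto
  qed
  then obtain w where w: "\<And>k. - (e * (1/2) ^ Suc k) < q (w k)" by metis
  have gs: "(\<lambda>k. e * (1/2) ^ Suc k) sums (e * 1)" by (rule sums_mult[OF power_half_series])
  have sm: "summable (\<lambda>k. q (w k))"
  proof (rule summable_comparison_test')
    show "summable (\<lambda>k. e * (1/2::real) ^ Suc k)" using gs by (rule sums_summable)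
    show "norm (q (w k)) \<le> e * (1/2) ^ Suc k" for k using w[of k] q_nonpos[of "w k"] by simp
  qed
  have "- e \<le> Q w" unfolding Q_def
  proof -
    have "(\<lambda>k. - (e * (1/2) ^ Suc k)) sums (- (e * 1))" by (rule sums_minus[OF gs])
    then have "- e = (\<Sum>k. - (e * (1/2) ^ Suc k))" by (simp add: sums_iff)
    also have "\<dots> \<le> (\<Sum>k. q (w k))"
      by (rule suminf_le) (use w sm \<open>(\<lambda>k. - (e * (1/2) ^ Suc k)) sums (- (e * 1))\<close> in \<open>auto intro: less_imp_le sums_summable\<close>)
    finally show "- e \<le> (\<Sum>k. q (w k))" .
  qed
  moreover have "w \<in> W" using sm unfolding W_def by simp
  ultimately show ?thesis by blast
qed

lemma W_ne: "W \<noteq> {}" using W_approx[of 1] by auto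

lemma SUP_Q: "(SUP w\<in>W. Q w) = 0"
proof (rule antisym)
  show "(SUP w\<in>W. Q w) \<le> 0" using W_ne Q_nonpos by (intro cSUP_least) auto
  have bdd: "bdd_above (Q ` W)" by (rule bdd_aboveI[where M=0]) (use Q_nonpos in auto)
  show "0 \<le> (SUP w\<in>W. Q w)"
  proof (rule field_le_epsilon)
    fix e :: real assume "0 < e"
    then obtain w where w: "w \<in> W" "- e \<le> Q w" using W_approx by blast
    have "Q w \<le> (SUP w\<in>W. Q w)" by (rule cSUP_upper[OF w(1) bdd])
    then show "0 \<le> (SUP w\<in>W. Q w) + e" using w by simp
  qed
qed

definition "\<nu>0 f = (if continuous_on UNIV f then (SUP w\<in>W. Q w + f (\<pi> w)) else 0)"

lemma h_bdd: assumes "\<And>x. f x \<le> B" shows "bdd_above ((\<lambda>w. Q w + f (\<pi> w)) ` W)"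
proof (rule bdd_aboveI[where M=B])
  fix z assume "z \<in> (\<lambda>w. Q w + f (\<pi> w)) ` W"
  then obtain w where "w \<in> W" "z = Q w + f (\<pi> w)" by blast
  then show "z \<le> B" using Q_nonpos assms[of "\<pi> w"] by force
qed

lemma cont_ub: assumes "continuous_on UNIV (f::'a \<Rightarrow> real)" obtains B where "\<And>x. f x \<le> B"
  using cont_bdd[OF assms] by (metis abs_le_iff)

lemma \<nu>0_in: "\<nu>0 \<in> idem_prob"
  unfolding idem_prob_def
proof (intro CollectI conjI allI impI)
  fix a f assume f: "continuous_on UNIV (f::'a\<Rightarrow>real)"
  have f': "continuous_on UNIV (\<lambda>x. a + f x)" using f by (auto intro!: continuous_intros)
  obtain B where B: "\<And>x. f x \<le> B" using cont_ub[OF f] by blast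
  have "\<nu>0 (\<lambda>x. a + f x) = (SUP w\<in>W. a + (Q w + f (\<pi> w)))"
    unfolding \<nu>0_def using f' by (simp add: algebra_simps)
  also have "\<dots> = a + (SUP w\<in>W. Q w + f (\<pi> w))"
    by (rule sup_add_const[OF W_ne h_bdd[OF B]])
  finally show "\<nu>0 (\<lambda>x. a + f x) = a + \<nu>0 f" unfolding \<nu>0_def using f by simp
next
  fix f g assume f: "continuous_on UNIV (f::'a\<Rightarrow>real)" and g: "continuous_on UNIV (g::'a\<Rightarrow>real)"
  have fg: "continuous_on UNIV (\<lambda>x. max (f x) (g x))" using f g by (auto intro!: continuous_intros)
  obtain B where B: "\<And>x. f x \<le> B" using cont_ub[OF f] by blast
  obtain C where C: "\<And>x. g x \<le> C" using cont_ub[OF g] by blast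
  have "\<nu>0 (\<lambda>x. max (f x) (g x)) = (SUP w\<in>W. max (Q w + f (\<pi> w)) (Q w + g (\<pi> w)))"
    unfolding \<nu>0_def using fg by (simp add: max_add_distrib_right)
  also have "\<dots> = max (SUP w\<in>W. Q w + f (\<pi> w)) (SUP w\<in>W. Q w + g (\<pi> w))"
    by (rule sup_max[OF W_ne h_bdd[OF B] h_bdd[OF C]])
  finally show "\<nu>0 (\<lambda>x. max (f x) (g x)) = max (\<nu>0 f) (\<nu>0 g)" unfolding \<nu>0_def using f g by simp
next
  show "\<nu>0 (\<lambda>x. 0) = 0" unfolding \<nu>0_def using SUP_Q by simp
next
  fix f assume "\<not> continuous_on UNIV (f::'a\<Rightarrow>real)"
  then show "\<nu>0 f = 0" by (simp add: \<nu>0_def)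
qed

lemma double_sup:
  fixes h :: "(nat \<Rightarrow> nat) \<Rightarrow> real"
  assumes B: "\<And>w. w \<in> W \<Longrightarrow> h w \<le> B"
  shows "(SUP j. SUP w\<in>W. h (case_nat j w)) = (SUP w\<in>W. h w)"
proof -
  have bW: "bdd_above (h ` W)" by (rule bdd_aboveI[where M=B]) (use B in auto)
  have bi: "bdd_above ((\<lambda>w. h (case_nat j w)) ` W)" for j
    by (rule bdd_aboveI[where M=B]) (use B W_cons in auto)
  have ib: "(SUP w\<in>W. h (case_nat j w)) \<le> B" for j
    by (rule cSUP_least[OF W_ne]) (use B W_cons in auto)
  have bo: "bdd_above (range (\<lambda>j. SUP w\<in>W. h (case_nat j w)))"
    by (rule bdd_aboveI[where M=B]) (use ib in auto)
  show ?thesis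
  proof (rule antisym)
    show "(SUP j. SUP w\<in>W. h (case_nat j w)) \<le> (SUP w\<in>W. h w)"
    proof (rule cSUP_least)
      fix j
      show "(SUP w\<in>W. h (case_nat j w)) \<le> (SUP w\<in>W. h w)"
        by (rule cSUP_least[OF W_ne]) (use cSUP_upper[OF W_cons bW] in auto)
    qed simp
    show "(SUP w\<in>W. h w) \<le> (SUP j. SUP w\<in>W. h (case_nat j w))"
    proof (rule cSUP_least[OF W_ne])
      fix w assume w: "w \<in> W"
      have "h w = h (case_nat (w 0) (\<lambda>k. w (Suc k)))" by (simp only: cons_tail)
      also have "\<dots> \<le> (SUP w'\<in>W. h (case_nat (w 0) w'))" by (rule cSUP_upper[OF W_tail[OF w] bi])
      also have "\<dots> \<le> (SUP j. SUP w\<in>W. h (case_nat j w))" by (rule cSUP_upper[OF _ bo]) simp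
      finally show "h w \<le> (SUP j. SUP w\<in>W. h (case_nat j w))" .
    qed
  qed
qed

lemma \<nu>0_fix: "M_op \<phi> q \<nu>0 = \<nu>0"
proof
  fix f :: "'a \<Rightarrow> real"
  show "M_op \<phi> q \<nu>0 f = \<nu>0 f"
  proof (cases "continuous_on UNIV f")
    case False then show ?thesis by (simp add: M_op_def \<nu>0_def)
  next
    case f: True
    obtain B where B: "\<And>x. f x \<le> B" using cont_ub[OF f] by blast
    have "M_op \<phi> q \<nu>0 f = (SUP j. q j + \<nu>0 (f \<circ> \<phi> j))" by (rule M_app[OF f])
    also have "\<dots> = (SUP j. q j + (SUP w\<in>W. Q w + f (\<phi> j (\<pi> w))))"
      unfolding \<nu>0_def using comp_cont[OF f] by simp
    also have "\<dots> = (SUP j. SUP w\<in>W. q j + (Q w + f (\<phi> j (\<pi> w))))"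
    proof -
      have "q j + (SUP w\<in>W. Q w + f (\<phi> j (\<pi> w))) = (SUP w\<in>W. q j + (Q w + f (\<phi> j (\<pi> w))))" for j
        by (rule sup_add_const[OF W_ne, symmetric]) (rule h_bdd, rule B)
      then show ?thesis by simp
    qed
    also have "\<dots> = (SUP j. SUP w\<in>W. Q (case_nat j w) + f (\<pi> (case_nat j w)))"
    proof -
      have "(SUP w\<in>W. q j + (Q w + f (\<phi> j (\<pi> w)))) = (SUP w\<in>W. Q (case_nat j w) + f (\<pi> (case_nat j w)))" for j
        by (rule SUP_cong) (simp_all add: Q_cons \<pi>_cons)
      then show ?thesis by simp
    qed
    also have "\<dots> = (SUP w\<in>W. Q w + f (\<pi> w))"
    proof (rule double_sup[where B=B])
      fix w assume "w \<in> W"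
      then show "Q w + f (\<pi> w) \<le> B" using Q_nonpos[of w] B[of "\<pi> w"] by linarith
    qed
    also have "\<dots> = \<nu>0 f" unfolding \<nu>0_def using f by simp
    finally show ?thesis .
  qed
qed


lemma iter_in:
  fixes \<mu> :: "('a \<Rightarrow> real) \<Rightarrow> real"
  shows "\<mu> \<in> idem_prob \<Longrightarrow> (M_op \<phi> q ^^ n) \<mu> \<in> idem_prob"
  by (induction n) (auto intro: M_in)

lemma iter_fix:
  fixes \<nu> :: "('a \<Rightarrow> real) \<Rightarrow> real"
  shows "M_op \<phi> q \<nu> = \<nu> \<Longrightarrow> (M_op \<phi> q ^^ n) \<nu> = \<nu>"
  by (induction n) auto

lemma ratio: "0 < \<gamma> / \<tau>" "\<gamma> / \<tau> < 1" using \<gamma> \<tau> by auto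

lemma main:
  shows "(\<forall>\<mu>\<in>idem_prob. \<forall>\<nu>\<in>idem_prob.
            d_tilde \<gamma> \<tau> (M_op \<phi> q \<mu>) (M_op \<phi> q \<nu>) \<le> \<gamma> / \<tau> * d_tilde \<gamma> \<tau> \<mu> \<nu>)
       \<and> \<gamma> / \<tau> < 1
       \<and> (\<exists>!\<nu>. \<nu> \<in> idem_prob \<and> M_op \<phi> q \<nu> = \<nu>)
       \<and> (\<forall>\<nu>\<in>idem_prob. M_op \<phi> q \<nu> = \<nu> \<longrightarrow>
            (\<forall>\<mu>\<in>idem_prob. (\<lambda>n. d_tilde \<gamma> \<tau> ((M_op \<phi> q ^^ n) \<mu>) \<nu>) \<longlonglongrightarrow> 0))"
proof (intro conjI ballI impI)
  show "d_tilde \<gamma> \<tau> (M_op \<phi> q \<mu>) (M_op \<phi> q \<nu>) \<le> \<gamma> / \<tau> * d_tilde \<gamma> \<tau> \<mu> \<nu>"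
    if "\<mu> \<in> idem_prob" "\<nu> \<in> idem_prob" for \<mu> \<nu> using contraction that by blast
  show "\<gamma> / \<tau> < 1" by (rule ratio(2))
  show "\<exists>!\<nu>. \<nu> \<in> idem_prob \<and> M_op \<phi> q \<nu> = \<nu>"
  proof (rule ex_ex1I)
    show "\<exists>\<nu>. \<nu> \<in> idem_prob \<and> M_op \<phi> q \<nu> = \<nu>" using \<nu>0_in \<nu>0_fix by blast
    fix \<nu>1 \<nu>2 assume a: "\<nu>1 \<in> idem_prob \<and> M_op \<phi> q \<nu>1 = \<nu>1" "\<nu>2 \<in> idem_prob \<and> M_op \<phi> q \<nu>2 = \<nu>2"
    have "d_tilde \<gamma> \<tau> \<nu>1 \<nu>2 \<le> \<gamma> / \<tau> * d_tilde \<gamma> \<tau> \<nu>1 \<nu>2"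
      using contraction[of \<nu>1 \<nu>2] a by simp
    moreover have "0 \<le> d_tilde \<gamma> \<tau> \<nu>1 \<nu>2" using dtilde_nonneg a by blast
    ultimately have "d_tilde \<gamma> \<tau> \<nu>1 \<nu>2 = 0" using ratio
      by (smt (verit) mult_le_cancel_right1)
    then show "\<nu>1 = \<nu>2" using dtilde0 a by blast
  qed
  fix \<nu> \<mu> :: "('a \<Rightarrow> real) \<Rightarrow> real" assume \<nu>: "\<nu> \<in> idem_prob" and fx: "M_op \<phi> q \<nu> = \<nu>" and \<mu>: "\<mu> \<in> idem_prob"
  have le: "d_tilde \<gamma> \<tau> ((M_op \<phi> q ^^ n) \<mu>) \<nu> \<le> (\<gamma> / \<tau>) ^ n * d_tilde \<gamma> \<tau> \<mu> \<nu>" for n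
  proof (induction n)
    case 0 then show ?case by simp
  next
    case (Suc n)
    have "d_tilde \<gamma> \<tau> ((M_op \<phi> q ^^ Suc n) \<mu>) \<nu> = d_tilde \<gamma> \<tau> (M_op \<phi> q ((M_op \<phi> q ^^ n) \<mu>)) (M_op \<phi> q \<nu>)"
      using fx by simp
    also have "\<dots> \<le> \<gamma> / \<tau> * d_tilde \<gamma> \<tau> ((M_op \<phi> q ^^ n) \<mu>) \<nu>"
      by (rule contraction[OF iter_in[OF \<mu>] \<nu>])
    also have "\<dots> \<le> \<gamma> / \<tau> * ((\<gamma> / \<tau>) ^ n * d_tilde \<gamma> \<tau> \<mu> \<nu>)"
      by (rule mult_left_mono[OF Suc]) (use ratio in simp)
    finally show ?case by simp
  qed
  have ge: "0 \<le> d_tilde \<gamma> \<tau> ((M_op \<phi> q ^^ n) \<mu>) \<nu>" for n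
    by (rule dtilde_nonneg[OF iter_in[OF \<mu>] \<nu>])
  have lim: "(\<lambda>n. (\<gamma> / \<tau>) ^ n * d_tilde \<gamma> \<tau> \<mu> \<nu>) \<longlonglongrightarrow> 0 * d_tilde \<gamma> \<tau> \<mu> \<nu>"
    using ratio by (intro tendsto_intros) auto
  show "(\<lambda>n. d_tilde \<gamma> \<tau> ((M_op \<phi> q ^^ n) \<mu>) \<nu>) \<longlonglongrightarrow> 0"
    by (rule tendsto_sandwich[where f="\<lambda>n. 0" and h="\<lambda>n. (\<gamma> / \<tau>) ^ n * d_tilde \<gamma> \<tau> \<mu> \<nu>"])
       (use ge le lim in auto)
qed

end

theorem theorem3p3:
  fixes \<phi> :: "nat \<Rightarrow> 'a::metric_space \<Rightarrow> 'a" and q :: "nat \<Rightarrow> real"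
    and \<gamma> \<tau> :: real
  assumes X_compact: "compact (UNIV :: 'a set)"
    and \<gamma>: "0 < \<gamma>" "\<gamma> < 1"
    and \<phi>_contr: "\<And>j x1 x2. dist (\<phi> j x1) (\<phi> j x2) \<le> \<gamma> * dist x1 x2"
    and q_nonpos: "\<And>j. q j \<le> 0"
    and q_sup: "(SUP j. q j) = 0"
    and \<tau>: "\<gamma> < \<tau>" "\<tau> < 1"
  shows "(\<forall>\<mu>\<in>idem_prob. \<forall>\<nu>\<in>idem_prob.
            d_tilde \<gamma> \<tau> (M_op \<phi> q \<mu>) (M_op \<phi> q \<nu>) \<le> \<gamma> / \<tau> * d_tilde \<gamma> \<tau> \<mu> \<nu>)
       \<and> \<gamma> / \<tau> < 1
       \<and> (\<exists>!\<nu>. \<nu> \<in> idem_prob \<and> M_op \<phi> q \<nu> = \<nu>)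
       \<and> (\<forall>\<nu>\<in>idem_prob. M_op \<phi> q \<nu> = \<nu> \<longrightarrow>
            (\<forall>\<mu>\<in>idem_prob. (\<lambda>n. d_tilde \<gamma> \<tau> ((M_op \<phi> q ^^ n) \<mu>) \<nu>) \<longlonglongrightarrow> 0))"
proof -
  have "bounded (UNIV :: 'a set)" by (rule compact_imp_bounded[OF X_compact])
  then obtain c :: 'a and e where e: "\<And>y. dist c y \<le> e" unfolding bounded_def by blast
  have Dbd: "dist x y \<le> 2 * e" for x y :: 'a
    using dist_triangle[of x y c] e[of x] e[of y] by (simp add: dist_commute)
  interpret setting \<phi> q \<gamma> \<tau> "2 * e"
    by unfold_locales (use assms Dbd in auto)
  show ?thesis by (rule main)
qed

end
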